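(* Let $\mathcal{C}$ be a binary linear $[n,k,d]$ code with $d>3$, and let $\ell$ be an integer with $3\le\ell\le d$. Then $$\rho_{\ell}(\mathcal{C})\;\le\;\binom{n-k}{1}+\binom{n-k}{2}+\cdots+\binom{n-k}{\ell-2}.$$
   Context: For a binary matrix with columns indexed by $\{0,\ldots,n-1\}$, a row resolves a nonempty column set $I$ if its restriction to $I$ has Hamming weight exactly one; $I$ is a stopping set if no row resolves it; the stopping distance is the minimum size of a stopping set. A (possibly redundant) parity-check matrix of $\mathcal{C}$ is a binary matrix whose row space equals $\mathcal{C}^\perp$; $\rho_\ell(\mathcal{C})$ is the smallest number of rows of such a matrix with stopping distance at least $\ell$. *)

theory Defs
  imports Main "HOL-Library.Extended_Nat"
begin

text \<open>Binary vectors of length n are represented by their supports, i.e. subsets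
of {0..<n}; addition over GF(2) is symmetric difference, and the inner product
of x and y is the parity of card (x \<inter> y).  A binary matrix with n columns is a
list of rows (repetitions allowed), each row a subset of {0..<n}.\<close>

definition vadd :: "nat set \<Rightarrow> nat set \<Rightarrow> nat set" where
  "vadd x y = (x - y) \<union> (y - x)"

definition binary_linear_code :: "nat \<Rightarrow> nat set set \<Rightarrow> bool" where
  "binary_linear_code n C \<longleftrightarrow>
     C \<subseteq> Pow {0..<n} \<and> {} \<in> C \<and> (\<forall>x\<in>C. \<forall>y\<in>C. vadd x y \<in> C)"

text \<open>[n,k,d] code: linear, dimension k (so 2^k codewords), minimum distance d
(minimum Hamming weight of a nonzero codeword).\<close>
definition is_nkd_code :: "nat \<Rightarrow> nat \<Rightarrow> nat \<Rightarrow> nat set set \<Rightarrow> bool" where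
  "is_nkd_code n k d C \<longleftrightarrow>
     binary_linear_code n C \<and> card C = 2 ^ k \<and>
     (\<exists>c\<in>C. c \<noteq> {} \<and> card c = d) \<and> (\<forall>c\<in>C. c \<noteq> {} \<longrightarrow> d \<le> card c)"

definition dual_code :: "nat \<Rightarrow> nat set set \<Rightarrow> nat set set" where
  "dual_code n C = {x. x \<subseteq> {0..<n} \<and> (\<forall>c\<in>C. even (card (x \<inter> c)))}"

definition row_comb :: "nat set list \<Rightarrow> nat set \<Rightarrow> nat set" where
  "row_comb H S = {j. odd (card {i\<in>S. j \<in> H ! i})}"

definition row_space :: "nat set list \<Rightarrow> nat set set" where
  "row_space H = {row_comb H S | S. S \<subseteq> {0..<length H}}"

definition is_binary_matrix :: "nat \<Rightarrow> nat set list \<Rightarrow> bool" where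
  "is_binary_matrix n H \<longleftrightarrow> (\<forall>r\<in>set H. r \<subseteq> {0..<n})"

definition is_parity_check_matrix :: "nat \<Rightarrow> nat set set \<Rightarrow> nat set list \<Rightarrow> bool" where
  "is_parity_check_matrix n C H \<longleftrightarrow>
     is_binary_matrix n H \<and> row_space H = dual_code n C"

definition resolves :: "nat set \<Rightarrow> nat set \<Rightarrow> bool" where
  "resolves r I \<longleftrightarrow> card (r \<inter> I) = 1"

definition stopping_set :: "nat \<Rightarrow> nat set list \<Rightarrow> nat set \<Rightarrow> bool" where
  "stopping_set n H I \<longleftrightarrow>
     I \<subseteq> {0..<n} \<and> I \<noteq> {} \<and> (\<forall>r\<in>set H. \<not> resolves r I)"

text \<open>Stopping distance; \<infinity> if there is no stopping set.\<close>
definition stopping_distance :: "nat \<Rightarrow> nat set list \<Rightarrow> enat" where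
  "stopping_distance n H = (INF I\<in>{I. stopping_set n H I}. enat (card I))"

text \<open>rho_l(C); \<infinity> if no suitable parity-check matrix exists.\<close>
definition rho :: "nat \<Rightarrow> nat \<Rightarrow> nat set set \<Rightarrow> enat" where
  "rho n l C = (INF H\<in>{H. is_parity_check_matrix n C H \<and>
                          enat l \<le> stopping_distance n H}. enat (length H))"

end

theory Submission
  imports Defs
begin

lemma card_vadd_parity:
  assumes "finite A" "finite B"
  shows "even (card (vadd A B)) \<longleftrightarrow> (even (card A) \<longleftrightarrow> even (card B))"
proof -
  have d: "vadd A B = (A - B) \<union> (B - A)" by (simp add: vadd_def)
  have c1: "card (vadd A B) = card (A - B) + card (B - A)"
    unfolding d using assms by (subst card_Un_disjoint) auto
  have c2: "card A = card (A - B) + card (A \<inter> B)"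
    using assms by (metis Diff_Diff_Int card_Diff_subset Int_lower1 card_mono le_add_diff_inverse2 Diff_subset finite_Diff card_Diff_subset_Int inf_commute add.commute)
  have c3: "card B = card (B - A) + card (A \<inter> B)"
    using assms by (metis Diff_Diff_Int card_Diff_subset Int_lower2 card_mono le_add_diff_inverse2 Diff_subset finite_Diff card_Diff_subset_Int inf_commute add.commute)
  show ?thesis using c1 c2 c3 by presburger
qed

lemma neg1_vadd:
  assumes "finite A" "finite B"
  shows "(-1::int) ^ card (vadd A B) = (-1) ^ card A * (-1) ^ card B"
  using card_vadd_parity[OF assms]
  by (cases "even (card A)"; cases "even (card B)") auto

lemma Int_vadd: "x \<inter> vadd a b = vadd (x \<inter> a) (x \<inter> b)"
  by (auto simp: vadd_def)

lemma vadd_Int: "vadd a b \<inter> x = vadd (a \<inter> x) (b \<inter> x)"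
  by (auto simp: vadd_def)

lemma vadd_vadd_cancel[simp]: "vadd v (vadd v x) = x"
  by (auto simp: vadd_def)

lemma vadd_comm: "vadd a b = vadd b a" by (auto simp: vadd_def)

lemma sum_flip_zero:
  fixes f :: "'a \<Rightarrow> int"
  assumes "bij_betw g A A" "\<And>a. a \<in> A \<Longrightarrow> f (g a) = - f a"
  shows "sum f A = 0"
proof -
  have "sum f A = sum (\<lambda>a. f (g a)) A" using sum.reindex_bij_betw[OF assms(1), of f] by simp
  also have "\<dots> = - sum f A" using assms(2) by (simp add: sum_negf)
  finally show ?thesis by simp
qed

lemma inv_bij:
  assumes "\<And>x. x \<in> A \<Longrightarrow> g x \<in> A" "\<And>x. x \<in> A \<Longrightarrow> g (g x) = x"
  shows "bij_betw g A A"
proof -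
  have "inj_on g A" unfolding inj_on_def by (metis assms(2))
  moreover have "g ` A = A"
  proof
    show "g ` A \<subseteq> A" using assms(1) by auto
    show "A \<subseteq> g ` A" proof fix x assume "x \<in> A" then show "x \<in> g ` A"
      using assms by (metis image_eqI) qed
  qed
  ultimately show ?thesis by (simp add: bij_betw_def)
qed

lemma dual_count:
  assumes fin: "finite A" and CA: "C \<subseteq> Pow A" and e: "{} \<in> C"
    and cl: "\<And>x y. x \<in> C \<Longrightarrow> y \<in> C \<Longrightarrow> vadd x y \<in> C"
  shows "card {x. x \<subseteq> A \<and> (\<forall>c\<in>C. even (card (x \<inter> c)))} * card C = 2 ^ card A"
proof -
  define Dl where "Dl = {x. x \<subseteq> A \<and> (\<forall>c\<in>C. even (card (x \<inter> c)))}"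
  define s where "s x c = (-1::int) ^ card (x \<inter> c)" for x c :: "nat set"
  have finC: "finite C" using CA fin by (meson finite_Pow_iff finite_subset)
  have finx: "finite x" if "x \<subseteq> A" for x using that fin finite_subset by blast
  have inner1: "(\<Sum>c\<in>C. s x c) = (if x \<in> Dl then int (card C) else 0)" if xA: "x \<subseteq> A" for x :: "nat set"
  proof (cases "x \<in> Dl")
    case True
    then have "\<forall>c\<in>C. s x c = 1" by (auto simp: Dl_def s_def)
    then show ?thesis using True by simp
  next
    case False
    then obtain c0 where c0: "c0 \<in> C" "odd (card (x \<inter> c0))" using xA by (auto simp: Dl_def)
    have "sum (s x) C = 0"
    proof (rule sum_flip_zero[where g="vadd c0"])
      show "bij_betw (vadd c0) C C" by (rule inv_bij) (use cl c0 in auto)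
      fix c assume "c \<in> C"
      then have "finite c" "finite c0" using CA c0 finx by auto
      then show "s x (vadd c0 c) = - s x c"
        unfolding s_def Int_vadd using c0 by (simp add: neg1_vadd)
    qed
    then show ?thesis using False by simp
  qed
  have inner2: "(\<Sum>x\<in>Pow A. s x c) = (if c = {} then 2 ^ card A else 0)" if cC: "c \<in> C" for c :: "nat set"
  proof (cases "c = {}")
    case True
    then show ?thesis by (simp add: s_def card_Pow fin)
  next
    case False
    then obtain j where j: "j \<in> c" by auto
    have jA: "j \<in> A" using j cC CA by auto
    have "sum (\<lambda>x. s x c) (Pow A) = 0"
    proof (rule sum_flip_zero[where g="\<lambda>x. vadd x {j}"])
      show "bij_betw (\<lambda>x. vadd x {j}) (Pow A) (Pow A)" by (rule inv_bij) (use jA in \<open>auto simp: vadd_def\<close>)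
      fix x assume "x \<in> Pow A"
      then have "finite (x \<inter> c)" using finx by auto
      moreover have "vadd x {j} \<inter> c = vadd (x \<inter> c) {j}" using j by (auto simp: vadd_def)
      ultimately show "s (vadd x {j}) c = - s x c"
        unfolding s_def by (simp add: neg1_vadd)
    qed
    then show ?thesis using False by simp
  qed
  have "(\<Sum>x\<in>Pow A. \<Sum>c\<in>C. s x c) = (\<Sum>x\<in>Pow A. if x \<in> Dl then int (card C) else 0)"
    using inner1 by (intro sum.cong) auto
  also have "\<dots> = (\<Sum>x\<in>{x\<in>Pow A. x \<in> Dl}. int (card C))"
    using fin by (simp only: sum.inter_filter finite_Pow_iff)
  also have "{x\<in>Pow A. x \<in> Dl} = Dl" by (auto simp: Dl_def)
  finally have L: "(\<Sum>x\<in>Pow A. \<Sum>c\<in>C. s x c) = int (card Dl) * int (card C)" by simp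
  have "(\<Sum>x\<in>Pow A. \<Sum>c\<in>C. s x c) = (\<Sum>c\<in>C. \<Sum>x\<in>Pow A. s x c)" by (rule sum.swap)
  also have "\<dots> = (\<Sum>c\<in>C. if c = {} then 2 ^ card A else 0)"
    using inner2 by (intro sum.cong) auto
  also have "\<dots> = 2 ^ card A" using finC e by (simp add: sum.delta')
  finally have "int (card Dl * card C) = int (2 ^ card A)" using L by simp
  then show ?thesis unfolding Dl_def by (simp only: of_nat_eq_iff)
qed


lemma row_comb_vadd:
  assumes "finite S" "finite T"
  shows "row_comb H (vadd S T) = vadd (row_comb H S) (row_comb H T)"
proof -
  have e: "{i \<in> vadd S T. j \<in> H ! i} = vadd {i\<in>S. j \<in> H ! i} {i\<in>T. j \<in> H ! i}" for j
    by (auto simp: vadd_def)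
  show ?thesis
  proof (rule set_eqI)
    fix j
    have f1: "finite {i\<in>S. j \<in> H ! i}" "finite {i\<in>T. j \<in> H ! i}" using assms by auto
    have "odd (card {i\<in>vadd S T. j \<in> H ! i}) \<longleftrightarrow>
      (odd (card {i\<in>S. j \<in> H ! i}) \<longleftrightarrow> \<not> odd (card {i\<in>T. j \<in> H ! i}))"
      using card_vadd_parity[OF f1] by (simp only: e) blast
    then show "j \<in> row_comb H (vadd S T) \<longleftrightarrow> j \<in> vadd (row_comb H S) (row_comb H T)"
      unfolding row_comb_def vadd_def by blast
  qed
qed

lemma row_comb_empty[simp]: "row_comb H {} = {}"
  by (simp add: row_comb_def)

lemma row_comb_single[simp]: "row_comb H {i} = H ! i"
proof -
  have "{i'\<in>{i}. j \<in> H ! i'} = (if j \<in> H ! i then {i} else {})" for j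
    by auto
  then have "card {i'\<in>{i}. j \<in> H ! i'} = (if j \<in> H ! i then 1 else 0)" for j
    by simp
  then show ?thesis by (auto simp: row_comb_def)
qed

lemma row_comb_insert:
  assumes "finite S" "i \<notin> S"
  shows "row_comb H (insert i S) = vadd (H ! i) (row_comb H S)"
proof -
  have "insert i S = vadd {i} S" using assms by (auto simp: vadd_def)
  then show ?thesis using row_comb_vadd[of "{i}" S H] assms by simp
qed

lemma row_space_eq: "row_space H = row_comb H ` Pow {0..<length H}"
  by (auto simp: row_space_def)

lemma row_space_closed:
  "x \<in> row_space H \<Longrightarrow> y \<in> row_space H \<Longrightarrow> vadd x y \<in> row_space H"
  unfolding row_space_eq
proof (elim imageE)
  fix S T assume "S \<in> Pow {0..<length H}" "T \<in> Pow {0..<length H}" "x = row_comb H S" "y = row_comb H T"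
  moreover have "finite S" "finite T" using calculation finite_subset by auto
  moreover have "vadd S T \<in> Pow {0..<length H}" using calculation by (auto simp: vadd_def)
  ultimately show "vadd x y \<in> row_comb H ` Pow {0..<length H}"
    by (intro image_eqI[where x="vadd S T"]) (simp_all add: row_comb_vadd)
qed

lemma row_space_empty: "{} \<in> row_space H"
  unfolding row_space_eq by (rule image_eqI[where x="{}"]) auto

lemma row_in_row_space: "x \<in> set H \<Longrightarrow> x \<in> row_space H"
proof -
  assume "x \<in> set H"
  then obtain i where i: "i < length H" "x = H ! i" by (auto simp: in_set_conv_nth)
  then have "x = row_comb H {i}" by simp
  then show ?thesis unfolding row_space_eq using i by (intro image_eqI[where x="{i}"]) auto
qed

lemma row_comb_in:
  assumes e: "{} \<in> V" and cl: "\<And>x y. x \<in> V \<Longrightarrow> y \<in> V \<Longrightarrow> vadd x y \<in> V"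
    and HV: "\<And>i. i \<in> S \<Longrightarrow> H ! i \<in> V" and fS: "finite S"
  shows "row_comb H S \<in> V"
  using fS HV
proof (induction S rule: finite_induct)
  case empty then show ?case using e by simp
next
  case (insert i S)
  then show ?case by (simp add: row_comb_insert cl)
qed

lemma row_space_least:
  assumes e: "{} \<in> V" and cl: "\<And>x y. x \<in> V \<Longrightarrow> y \<in> V \<Longrightarrow> vadd x y \<in> V"
    and HV: "set H \<subseteq> V"
  shows "row_space H \<subseteq> V"
  unfolding row_space_eq
proof
  fix x assume "x \<in> row_comb H ` Pow {0..<length H}"
  then obtain S where S: "S \<subseteq> {0..<length H}" "x = row_comb H S" by auto
  have "finite S" using S finite_subset by blast
  moreover have "\<And>i. i \<in> S \<Longrightarrow> H ! i \<in> V" using S HV nth_mem by fastforce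
  ultimately show "x \<in> V" using row_comb_in[OF e cl] S by blast
qed

lemma row_comb_app1:
  assumes "S \<subseteq> {0..<length hs}"
  shows "row_comb (hs @ [v]) S = row_comb hs S"
proof -
  have "{i\<in>S. j \<in> (hs @ [v]) ! i} = {i\<in>S. j \<in> hs ! i}" for j
    using assms by (auto simp: nth_append)
  then show ?thesis by (simp add: row_comb_def)
qed

lemma row_space_app:
  "row_space (hs @ [v]) = row_space hs \<union> vadd v ` row_space hs"
proof
  let ?m = "length hs"
  show "row_space (hs @ [v]) \<subseteq> row_space hs \<union> vadd v ` row_space hs"
  proof
    fix x assume "x \<in> row_space (hs @ [v])"
    then obtain S where S: "S \<subseteq> {0..<Suc ?m}" "x = row_comb (hs @ [v]) S"
      by (auto simp: row_space_eq)
    show "x \<in> row_space hs \<union> vadd v ` row_space hs"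
    proof (cases "?m \<in> S")
      case False
      then have "S \<subseteq> {0..<?m}" using S by (auto simp: subset_iff less_Suc_eq)
      then show ?thesis using S row_comb_app1 by (auto simp: row_space_eq)
    next
      case True
      define S' where "S' = S - {?m}"
      have S'm: "S' \<subseteq> {0..<?m}" using S by (auto simp: S'_def)
      have fS': "finite S'" using S'm finite_subset by blast
      have "S = insert ?m S'" using True by (auto simp: S'_def)
      then have "x = vadd v (row_comb hs S')"
        using S row_comb_insert[OF fS', of ?m "hs @ [v]"] row_comb_app1[OF S'm]
        by (simp add: S'_def nth_append)
      then show ?thesis using S'm by (auto simp: row_space_eq)
    qed
  qed
  show "row_space hs \<union> vadd v ` row_space hs \<subseteq> row_space (hs @ [v])"
  proof
    fix x assume "x \<in> row_space hs \<union> vadd v ` row_space hs"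
    then obtain S where S: "S \<subseteq> {0..<?m}" and x: "x = row_comb hs S \<or> x = vadd v (row_comb hs S)"
      by (auto simp: row_space_eq)
    have fS: "finite S" using S finite_subset by blast
    have mS: "?m \<notin> S" using S by auto
    show "x \<in> row_space (hs @ [v])"
      using x
    proof
      assume "x = row_comb hs S"
      then show ?thesis unfolding row_space_eq using S row_comb_app1[OF S, of v]
        by (intro image_eqI[where x=S]) auto
    next
      assume "x = vadd v (row_comb hs S)"
      then have "x = row_comb (hs @ [v]) (insert ?m S)"
        using row_comb_insert[OF fS mS, of "hs @ [v]"] row_comb_app1[OF S, of v] by simp
      moreover have "insert ?m S \<subseteq> {0..<length (hs @ [v])}" using S by auto
      ultimately show ?thesis by (auto simp: row_space_eq)
    qed
  qed
qed

lemma finite_row_space: "finite (row_space H)"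
  by (simp add: row_space_eq)

lemma basis_ext:
  assumes fV: "finite V" and e: "{} \<in> V" and cl: "\<And>x y. x \<in> V \<Longrightarrow> y \<in> V \<Longrightarrow> vadd x y \<in> V"
  shows "set hs \<subseteq> V \<Longrightarrow> card (row_space hs) = 2 ^ length hs \<Longrightarrow>
    \<exists>hs'. set hs' \<subseteq> V \<and> row_space hs' = V \<and> card (row_space hs') = 2 ^ length hs'"
proof (induction "card V - card (row_space hs)" arbitrary: hs rule: less_induct)
  case (less hs)
  have sub: "row_space hs \<subseteq> V" using row_space_least[OF e cl less.prems(1)] .
  show ?case
  proof (cases "row_space hs = V")
    case True then show ?thesis using less.prems by blast
  next
    case False
    then obtain v where v: "v \<in> V" "v \<notin> row_space hs" using sub by auto
    let ?R = "row_space hs"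
    have disj: "?R \<inter> vadd v ` ?R = {}"
    proof (rule ccontr)
      assume "?R \<inter> vadd v ` ?R \<noteq> {}"
      then obtain y x where "y \<in> ?R" "x \<in> ?R" "y = vadd v x" by auto
      then have "v = vadd y x" by (auto simp: vadd_def)
      then show False using v row_space_closed \<open>y \<in> ?R\<close> \<open>x \<in> ?R\<close> by metis
    qed
    have injv: "inj_on (vadd v) ?R" by (rule inj_onI) (metis vadd_vadd_cancel)
    have cnew: "card (row_space (hs @ [v])) = 2 * card ?R"
      unfolding row_space_app
      using card_Un_disjoint[OF finite_row_space finite_imageI[OF finite_row_space] disj]
        card_image[OF injv] by simp
    then have c2: "card (row_space (hs @ [v])) = 2 ^ length (hs @ [v])" using less.prems(2) by simp
    have set2: "set (hs @ [v]) \<subseteq> V" using less.prems(1) v by auto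
    have sub2: "row_space (hs @ [v]) \<subseteq> V" using row_space_least[OF e cl set2] .
    have "card (row_space (hs @ [v])) \<le> card V" using card_mono[OF fV sub2] .
    moreover have "card ?R < card (row_space (hs @ [v]))" using cnew less.prems(2) by simp
    ultimately have "card V - card (row_space (hs @ [v])) < card V - card ?R" by linarith
    from less.hyps[OF this set2 c2] show ?thesis .
  qed
qed

lemma basis_exists:
  assumes fV: "finite V" and e: "{} \<in> V" and cl: "\<And>x y. x \<in> V \<Longrightarrow> y \<in> V \<Longrightarrow> vadd x y \<in> V"
  shows "\<exists>hs. set hs \<subseteq> V \<and> row_space hs = V \<and> card (row_space hs) = 2 ^ length hs"
proof -
  have "row_space [] = {{}}" by (auto simp: row_space_eq)
  then show ?thesis using basis_ext[OF fV e cl, of "[]"] by simp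
qed


lemma card_Tset:
  "card {S. S \<subseteq> {0..<r} \<and> 1 \<le> card S \<and> card S \<le> m} = (\<Sum>i=1..m. r choose i)"
proof -
  have "{S. S \<subseteq> {0..<r} \<and> 1 \<le> card S \<and> card S \<le> m} = (\<Union>i\<in>{1..m}. {S. S \<subseteq> {0..<r} \<and> card S = i})"
    by auto
  moreover have "card (\<Union>i\<in>{1..m}. {S. S \<subseteq> {0..<r} \<and> card S = i}) = (\<Sum>i=1..m. card {S. S \<subseteq> {0..<r} \<and> card S = i})"
    by (rule card_UN_disjoint) auto
  ultimately show ?thesis using n_subsets[of "{0..<r}"] by simp
qed

theorem theorem7:
  fixes n k d l :: nat and C :: "nat set set"
  assumes "is_nkd_code n k d C"
    and "d > 3"
    and "3 \<le> l" and "l \<le> d"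
  shows "rho n l C \<le> enat (\<Sum>i=1..l-2. (n - k) choose i)"
proof -
  have CP: "C \<subseteq> Pow {0..<n}" and Ce: "{} \<in> C" and Ccl: "\<And>x y. x \<in> C \<Longrightarrow> y \<in> C \<Longrightarrow> vadd x y \<in> C"
    and cardC: "card C = 2 ^ k" and md: "\<And>c. c \<in> C \<Longrightarrow> c \<noteq> {} \<Longrightarrow> d \<le> card c"
    using assms(1) by (auto simp: is_nkd_code_def binary_linear_code_def)
  define D where "D = dual_code n C"
  have Ddef: "D = {x. x \<subseteq> {0..<n} \<and> (\<forall>c\<in>C. even (card (x \<inter> c)))}"
    by (simp add: D_def dual_code_def)
  have cD: "card D * 2 ^ k = 2 ^ n"
    using dual_count[OF _ CP Ce Ccl] cardC by (simp add: Ddef)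
  have DP: "D \<subseteq> Pow {0..<n}" by (auto simp: Ddef)
  have fD: "finite D" using DP finite_subset by blast
  have De: "{} \<in> D" by (simp add: Ddef)
  have Dcl: "vadd x y \<in> D" if "x \<in> D" "y \<in> D" for x y
  proof -
    have "vadd x y \<subseteq> {0..<n}" using that by (auto simp: Ddef vadd_def)
    moreover have "even (card (vadd x y \<inter> c))" if "c \<in> C" for c
    proof -
      have "finite (x \<inter> c)" "finite (y \<inter> c)" using \<open>x \<in> D\<close> \<open>y \<in> D\<close> DP finite_subset by blast+
      then show ?thesis using card_vadd_parity \<open>x \<in> D\<close> \<open>y \<in> D\<close> that
        by (simp add: vadd_Int Ddef)
    qed
    ultimately show ?thesis by (simp add: Ddef)
  qed
  have cD1: "card D \<ge> 1" using De fD by (metis One_nat_def Suc_leI card_gt_0_iff empty_iff)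
  then have "2 ^ k \<le> (2::nat) ^ n" using cD by (metis le_add2 le_trans mult_le_mono1 mult_1)
  then have kn: "k \<le> n" by simp
  have cardD: "card D = 2 ^ (n - k)"
  proof -
    have "card D * 2 ^ k = 2 ^ (n - k) * 2 ^ k" using cD kn by (simp add: power_add[symmetric])
    then show ?thesis by simp
  qed
  define DD where "DD = dual_code n D"
  have DDdef: "DD = {x. x \<subseteq> {0..<n} \<and> (\<forall>c\<in>D. even (card (x \<inter> c)))}"
    by (simp add: DD_def dual_code_def)
  have "card DD * card D = 2 ^ n"
    using dual_count[OF _ DP De Dcl] by (simp add: DDdef)
  then have "card DD * card D = 2 ^ k * card D" using cD by (simp add: mult.commute)
  then have cardDD: "card DD = 2 ^ k" using cD1 by simp
  have "C \<subseteq> DD"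
  proof
    fix c assume "c \<in> C"
    show "c \<in> DD" unfolding DDdef
    proof (intro CollectI conjI ballI)
      show "c \<subseteq> {0..<n}" using CP \<open>c \<in> C\<close> by auto
      fix x assume "x \<in> D"
      then have "even (card (x \<inter> c))" using \<open>c \<in> C\<close> by (simp add: Ddef)
      then show "even (card (c \<inter> x))" by (simp add: Int_commute)
    qed
  qed
  moreover have "finite DD" by (auto simp: DDdef intro: finite_subset[of _ "Pow {0..<n}"])
  ultimately have CDD: "C = DD" using cardDD cardC by (simp add: card_subset_eq)
  obtain hs where hsV: "set hs \<subseteq> D" and hsD: "row_space hs = D"
    and hsc: "card (row_space hs) = 2 ^ length hs"
    using basis_exists[OF fD De Dcl] by blast
  define r where "r = length hs"
  have rnk: "r = n - k" using hsc hsD cardD by (simp add: r_def)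
  define Tset where "Tset = {S. S \<subseteq> {0..<r} \<and> 1 \<le> card S \<and> card S \<le> l - 2}"
  have fT: "finite Tset" unfolding Tset_def
    by (rule finite_subset[of _ "Pow {0..<r}"]) auto
  obtain xs where xs: "distinct xs" "set xs = Tset" using finite_distinct_list[OF fT] by blast
  define H' where "H' = map (row_comb hs) xs"
  have lenH: "length H' = (\<Sum>i=1..l-2. (n - k) choose i)"
    using distinct_card[OF xs(1)] xs(2) card_Tset rnk by (simp add: H'_def Tset_def)
  have setH: "set H' = row_comb hs ` Tset" using xs by (simp add: H'_def)
  have rcD: "row_comb hs S \<in> D" if "S \<subseteq> {0..<r}" for S
    using that hsD by (auto simp: row_space_eq r_def)
  have setHD: "set H' \<subseteq> D" using setH rcD by (auto simp: Tset_def)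
  have rs: "row_space H' = D"
  proof
    show "row_space H' \<subseteq> D" by (rule row_space_least[OF De Dcl setHD])
    have "set hs \<subseteq> row_space H'"
    proof
      fix v assume "v \<in> set hs"
      then obtain i where i: "i < r" "v = hs ! i" by (auto simp: in_set_conv_nth r_def)
      then have "{i} \<in> Tset" using assms(3) by (auto simp: Tset_def)
      then have "row_comb hs {i} \<in> set H'" using setH by blast
      then show "v \<in> row_space H'" using i row_in_row_space by simp
    qed
    then show "D \<subseteq> row_space H'"
      using row_space_least[OF row_space_empty row_space_closed] hsD by blast
  qed
  have pcm: "is_parity_check_matrix n C H'"
  proof -
    have "\<forall>x\<in>set H'. x \<subseteq> {0..<n}" using setHD DP by blast
    then show ?thesis using rs unfolding is_parity_check_matrix_def is_binary_matrix_def D_def by simp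
  qed
  have resolve: "\<exists>S\<in>Tset. card (row_comb hs S \<inter> I) = 1"
    if IP: "I \<subseteq> {0..<n}" and Ine: "I \<noteq> {}" and Il: "card I < l" for I
  proof -
    have fI: "finite I" using IP finite_subset by blast
    define Im where "Im = (\<lambda>x. x \<inter> I) ` D"
    have ImP: "Im \<subseteq> Pow I" by (auto simp: Im_def)
    have Ime: "{} \<in> Im" using De by (auto simp: Im_def)
    have Imcl: "vadd x y \<in> Im" if "x \<in> Im" "y \<in> Im" for x y
      using that Dcl by (auto simp: Im_def vadd_Int[symmetric])
    define DI where "DI = {x. x \<subseteq> I \<and> (\<forall>c\<in>Im. even (card (x \<inter> c)))}"
    have cDI: "card DI * card Im = 2 ^ card I"
      using dual_count[OF fI ImP Ime Imcl] by (simp add: DI_def)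
    have "DI \<subseteq> {{}}"
    proof
      fix a assume a: "a \<in> DI"
      then have aI: "a \<subseteq> I" by (simp add: DI_def)
      have "even (card (a \<inter> x))" if "x \<in> D" for x
      proof -
        have "x \<inter> I \<in> Im" using that by (simp add: Im_def)
        then have "even (card (a \<inter> (x \<inter> I)))" using a by (simp add: DI_def)
        moreover have "a \<inter> (x \<inter> I) = a \<inter> x" using aI by auto
        ultimately show ?thesis by simp
      qed
      then have "a \<in> C" using aI IP CDD by (auto simp: DDdef)
      moreover have "card a \<le> card I" using aI fI card_mono by blast
      ultimately have "a = {}" using md Il assms(4) by fastforce
      then show "a \<in> {{}}" by simp
    qed
    moreover have "{} \<in> DI" by (simp add: DI_def)
    ultimately have "DI = {{}}" by blast
    then have "card Im = 2 ^ card I" using cDI by simp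
    then have ImPow: "Im = Pow I" using ImP fI by (simp add: card_subset_eq card_Pow)
    obtain j where "j \<in> I" using Ine by blast
    then have "{j} \<in> Im" using ImPow by simp
    then obtain x where "x \<in> D" "x \<inter> I = {j}" by (auto simp: Im_def)
    then obtain S1 where S1: "S1 \<subseteq> {0..<r}" "row_comb hs S1 \<inter> I = {j}"
      using hsD by (auto simp: row_space_eq r_def)
    define f where "f T = row_comb hs T \<inter> I" for T
    define P where "P S \<longleftrightarrow> S \<subseteq> {0..<r} \<and> card (f S) = 1" for S
    have "P S1" using S1 by (simp add: P_def f_def)
    then obtain S0 where S0: "P S0" and S0min: "\<And>T. P T \<Longrightarrow> card S0 \<le> card T"
      using ex_has_least_nat[of P S1 card] by blast
    have S0r: "S0 \<subseteq> {0..<r}" using S0 by (simp add: P_def)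
    have fS0: "finite S0" using S0r finite_subset by blast
    have flin: "f (vadd T1 T2) = vadd (f T1) (f T2)" if "finite T1" "finite T2" for T1 T2
      using that by (simp add: f_def row_comb_vadd vadd_Int)
    have S0ne: "S0 \<noteq> {}" using S0 by (auto simp: P_def f_def)
    have injf: "inj_on f (Pow S0)"
    proof (rule inj_onI, rule ccontr)
      fix T1 T2 assume T: "T1 \<in> Pow S0" "T2 \<in> Pow S0" "f T1 = f T2" "T1 \<noteq> T2"
      have fT12: "finite T1" "finite T2" using T(1,2) fS0 by (auto intro: finite_subset)
      define T where "T = vadd T1 T2"
      have Tne: "T \<noteq> {}" using T(4) by (auto simp: T_def vadd_def)
      have TS0: "T \<subseteq> S0" using T by (auto simp: T_def vadd_def)
      have fT: "f T = {}" using flin[OF fT12] T(3) by (simp add: T_def vadd_def)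
      have fTf: "finite T" using TS0 fS0 finite_subset by blast
      define S' where "S' = vadd S0 T"
      have "f S' = f S0" using flin[OF fS0 fTf] fT by (simp add: S'_def vadd_def)
      moreover have S'eq: "S' = S0 - T" using TS0 by (auto simp: S'_def vadd_def)
      moreover have "S' \<subseteq> {0..<r}" using S'eq S0r by blast
      ultimately have PS': "P S'" using S0 unfolding P_def by simp
      have "card T > 0" using Tne fTf by auto
      moreover have "card S' = card S0 - card T" using S'eq card_Diff_subset[OF fTf TS0] by simp
      moreover have "card T \<le> card S0" using card_mono[OF fS0 TS0] .
      ultimately have "card S' < card S0" by linarith
      moreover have "card S0 \<le> card S'" using S0min[OF PS'] .
      ultimately show False by linarith
    qed
    have imgsub: "f ` Pow S0 \<subseteq> Pow I" by (auto simp: f_def)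
    have cimg: "card (f ` Pow S0) = 2 ^ card S0" using card_image[OF injf] fS0 by (simp add: card_Pow)
    have "(2::nat) ^ card S0 \<le> 2 ^ card I"
      using card_mono[OF _ imgsub] fI cimg by (simp add: card_Pow)
    then have S0I: "card S0 \<le> card I" by simp
    have S0I2: "card S0 < card I" if "2 \<le> card I"
    proof (rule ccontr)
      assume "\<not> card S0 < card I"
      then have eq: "card S0 = card I" using S0I by simp
      have imgeq: "f ` Pow S0 = Pow I"
        using imgsub cimg eq fI by (simp add: card_subset_eq card_Pow)
      obtain j0 where j0: "f S0 = {j0}" using S0 by (auto simp: P_def card_1_singleton_iff)
      have "I \<noteq> {j0}" using that by auto
      moreover have "j0 \<in> I" using j0 by (auto simp: f_def)
      ultimately obtain j' where j': "j' \<in> I" "j' \<noteq> j0" by blast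
      then have "{j'} \<in> f ` Pow S0" using imgeq by simp
      then obtain T where T: "T \<subseteq> S0" "f T = {j'}" by auto
      then have "P T" using S0r by (auto simp: P_def)
      then have "card S0 \<le> card T" by (rule S0min)
      then have "T = S0" using T(1) fS0 by (simp add: card_seteq)
      then show False using T(2) j0 j' by simp
    qed
    have "1 \<le> card S0" using S0ne fS0 by (simp add: Suc_leI card_gt_0_iff)
    moreover have "card S0 \<le> l - 2"
    proof (cases "2 \<le> card I")
      case True then show ?thesis using S0I2 Il by simp
    next
      case False then show ?thesis using S0I assms(3) by simp
    qed
    ultimately have "S0 \<in> Tset" using S0r by (simp add: Tset_def)
    then show ?thesis using S0 by (auto simp: P_def f_def)
  qed
  have sd: "enat l \<le> stopping_distance n H'"
    unfolding stopping_distance_def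
  proof (rule INF_greatest)
    fix I assume "I \<in> {I. stopping_set n H' I}"
    then have st: "I \<subseteq> {0..<n}" "I \<noteq> {}" "\<forall>r\<in>set H'. \<not> resolves r I"
      by (auto simp: stopping_set_def)
    show "enat l \<le> enat (card I)"
    proof (rule ccontr)
      assume "\<not> enat l \<le> enat (card I)"
      then have "card I < l" by simp
      then obtain S where "S \<in> Tset" "card (row_comb hs S \<inter> I) = 1" using resolve st by blast
      moreover then have "row_comb hs S \<in> set H'" using setH by blast
      ultimately show False using st(3) by (auto simp: resolves_def)
    qed
  qed
  have "rho n l C \<le> enat (length H')"
    unfolding rho_def by (rule INF_lower) (use pcm sd in simp)
  then show ?thesis using lenH by simp
qed

end
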